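(* Let $\Gamma$ be a countable group acting affinely on $\mathbb{R}^n$, let $\mathsf W\subseteq\mathbb{R}^n$ be a (not necessarily connected) open subset, and let $h:\mathsf W\to\mathbb{R}^n$ be a $C^1$ map preserving $\Gamma$-orbits (i.e. $h(x)\in\Gamma\cdot x$ for all $x$). Then for each $x\in\mathsf W$ there is $\gamma\in\Gamma$ such that $h$ and the map $y\mapsto\gamma\cdot y$ have the same germ at $x$.
   Context: Two maps have the same germ at $x$ if they agree on some neighbourhood of $x$. *)

theory Defs
  imports "HOL-Analysis.Analysis" "HOL-Algebra.Group_Action"
begin

definition affine_map :: "(real^'n \<Rightarrow> real^'n) \<Rightarrow> bool" where
  "affine_map f \<longleftrightarrow> (\<exists>L b. linear L \<and> (\<forall>x. f x = L x + b))"

definition C1_on :: "'a::euclidean_space set \<Rightarrow> ('a \<Rightarrow> 'b::real_normed_vector) \<Rightarrow> bool" where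
  "C1_on S f \<longleftrightarrow> (\<exists>D. (\<forall>x\<in>S. (f has_derivative blinfun_apply (D x)) (at x)) \<and> continuous_on S D)"

definition same_germ_at :: "'a::topological_space set \<Rightarrow> ('a \<Rightarrow> 'b) \<Rightarrow> ('a \<Rightarrow> 'b) \<Rightarrow> 'a \<Rightarrow> bool" where
  "same_germ_at S f g x \<longleftrightarrow> (\<exists>U. open U \<and> x \<in> U \<and> U \<subseteq> S \<and> (\<forall>y\<in>U. f y = g y))"

end

theory Submission
  imports Defs
begin


lemma cone_convex:
  fixes p u :: "'a::real_normed_vector"
  assumes "\<rho> > 0"
  shows "convex (\<Union>t\<in>{0<..<\<delta>}. ball (p + t *\<^sub>R u) (\<rho>*t))"
  unfolding convex_def
proof (intro ballI allI impI)
  fix x y and \<alpha> \<beta> :: real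
  assume x: "x \<in> (\<Union>t\<in>{0<..<\<delta>}. ball (p + t *\<^sub>R u) (\<rho>*t))"
    and y: "y \<in> (\<Union>t\<in>{0<..<\<delta>}. ball (p + t *\<^sub>R u) (\<rho>*t))"
    and ab1: "0 \<le> \<alpha>" and ab2: "0 \<le> \<beta>" and ab3: "\<alpha> + \<beta> = 1"
  have ab: "0 \<le> \<alpha> \<and> 0 \<le> \<beta> \<and> \<alpha> + \<beta> = 1" using ab1 ab2 ab3 by blast
  obtain t1 where t1: "0 < t1" "t1 < \<delta>" "norm (x - (p + t1 *\<^sub>R u)) < \<rho>*t1"
    using x by (auto simp: dist_norm norm_minus_commute)
  obtain t2 where t2: "0 < t2" "t2 < \<delta>" "norm (y - (p + t2 *\<^sub>R u)) < \<rho>*t2"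
    using y by (auto simp: dist_norm norm_minus_commute)
  define t where "t = \<alpha>*t1 + \<beta>*t2"
  have tpos: "0 < t" unfolding t_def using ab t1 t2
    by (metis add_pos_nonneg add_nonneg_pos mult_nonneg_nonneg mult_pos_pos less_eq_real_def add_cancel_right_left mult_zero_left not_less zero_less_one)
  have tlt: "t < \<delta>"
  proof -
    have "\<alpha>*t1 \<le> \<alpha>*\<delta>" "\<beta>*t2 \<le> \<beta>*\<delta>" using ab t1 t2 by (simp_all add: mult_left_mono)
    moreover have "\<alpha>*t1 < \<alpha>*\<delta> \<or> \<beta>*t2 < \<beta>*\<delta>" using ab t1 t2 by (cases "\<alpha> = 0") auto
    ultimately have "t < \<alpha>*\<delta> + \<beta>*\<delta>" unfolding t_def by linarith
    also have "\<dots> = \<delta>" using ab by (metis distrib_right mult_1)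
    finally show ?thesis .
  qed
  have eq: "\<alpha> *\<^sub>R x + \<beta> *\<^sub>R y - (p + t *\<^sub>R u) = \<alpha> *\<^sub>R (x - (p + t1 *\<^sub>R u)) + \<beta> *\<^sub>R (y - (p + t2 *\<^sub>R u))"
  proof -
    have "p = \<alpha> *\<^sub>R p + \<beta> *\<^sub>R p" using ab by (metis scaleR_add_left scaleR_one)
    then show ?thesis unfolding t_def by (simp add: algebra_simps scaleR_add_left)
  qed
  have "norm (\<alpha> *\<^sub>R x + \<beta> *\<^sub>R y - (p + t *\<^sub>R u)) \<le> \<alpha> * norm (x - (p + t1 *\<^sub>R u)) + \<beta> * norm (y - (p + t2 *\<^sub>R u))"
    unfolding eq using ab by (metis (no_types, lifting) abs_of_nonneg norm_scaleR norm_triangle_ineq)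
  also have "\<dots> < \<rho> * t"
  proof -
    have "\<alpha> * norm (x - (p + t1 *\<^sub>R u)) \<le> \<alpha> * (\<rho>*t1)" "\<beta> * norm (y - (p + t2 *\<^sub>R u)) \<le> \<beta> * (\<rho>*t2)"
      using ab t1 t2 by (simp_all add: mult_left_mono)
    moreover have "\<alpha> * norm (x - (p + t1 *\<^sub>R u)) < \<alpha> * (\<rho>*t1) \<or> \<beta> * norm (y - (p + t2 *\<^sub>R u)) < \<beta> * (\<rho>*t2)"
      using ab t1 t2 by (cases "\<alpha> = 0") auto
    ultimately have "\<alpha> * norm (x - (p + t1 *\<^sub>R u)) + \<beta> * norm (y - (p + t2 *\<^sub>R u)) < \<alpha> * (\<rho>*t1) + \<beta> * (\<rho>*t2)" by linarith
    then show ?thesis unfolding t_def by (simp add: algebra_simps)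
  qed
  finally show "\<alpha> *\<^sub>R x + \<beta> *\<^sub>R y \<in> (\<Union>t\<in>{0<..<\<delta>}. ball (p + t *\<^sub>R u) (\<rho>*t))"
    using tpos tlt by (auto simp: dist_norm norm_minus_commute intro!: bexI[of _ t])
qed

locale cfg =
  fixes G :: "('g, 'b) monoid_scheme"
    and \<phi> :: "'g \<Rightarrow> real^'n \<Rightarrow> real^'n"
    and W :: "(real^'n) set"
    and h :: "real^'n \<Rightarrow> real^'n"
    and D :: "real^'n \<Rightarrow> ((real^'n) \<Rightarrow>\<^sub>L (real^'n))"
    and L :: "'g \<Rightarrow> real^'n \<Rightarrow> real^'n"
    and bb :: "'g \<Rightarrow> real^'n"
  assumes cnt: "countable (carrier G)"
    and opW: "open W"
    and deriv: "\<And>x. x \<in> W \<Longrightarrow> (h has_derivative blinfun_apply (D x)) (at x)"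
    and contD: "continuous_on W D"
    and lin: "\<And>g. g \<in> carrier G \<Longrightarrow> linear (L g)"
    and phi: "\<And>g x. g \<in> carrier G \<Longrightarrow> \<phi> g x = L g x + bb g"
    and orb: "\<And>x. x \<in> W \<Longrightarrow> h x \<in> orbit G \<phi> x"
begin

definition jet where "jet g z \<longleftrightarrow> h z = \<phi> g z \<and> D z = Blinfun (L g)"
definition UU where "UU = {z\<in>W. \<exists>g\<in>carrier G. same_germ_at W h (\<phi> g) z}"

lemma phi_fun: "g \<in> carrier G \<Longrightarrow> \<phi> g = (\<lambda>x. L g x + bb g)"
  using phi by auto

lemma bl: "g \<in> carrier G \<Longrightarrow> bounded_linear (L g)"
  using lin linear_conv_bounded_linear by blast

lemma phi_cont: "g \<in> carrier G \<Longrightarrow> continuous_on S (\<phi> g)"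
  unfolding phi_fun by (intro continuous_intros linear_continuous_on bl)

lemma phi_deriv: "g \<in> carrier G \<Longrightarrow> (\<phi> g has_derivative L g) (at x)"
  unfolding phi_fun using bl[of g] by (auto intro!: derivative_eq_intros bounded_linear_imp_has_derivative)

lemma h_cont: "continuous_on W h"
  using deriv has_derivative_continuous continuous_at_imp_continuous_on by blast

lemma germ_jet:
  assumes g: "g \<in> carrier G" and sg: "same_germ_at W h (\<phi> g) z"
  shows "jet g z"
proof -
  obtain V where V: "open V" "z \<in> V" "V \<subseteq> W" "\<forall>y\<in>V. h y = \<phi> g y"
    using sg unfolding same_germ_at_def by blast
  have "(h has_derivative L g) (at z)"
    using has_derivative_transform_within_open[OF phi_deriv[OF g] V(1) V(2)] V(4) by metis
  then have "blinfun_apply (D z) = L g"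
    using has_derivative_unique deriv V by blast
  then show ?thesis unfolding jet_def using V
    by (metis blinfun_apply_inverse)
qed

lemma germ_open:
  assumes "same_germ_at W h f z"
  shows "\<exists>V. open V \<and> z \<in> V \<and> V \<subseteq> W \<and> (\<forall>y\<in>V. same_germ_at W h f y)"
  using assms unfolding same_germ_at_def by blast

lemma UU_open: "open UU"
  unfolding open_subopen[of UU]
proof
  fix z assume "z \<in> UU"
  then obtain g where g: "g \<in> carrier G" "same_germ_at W h (\<phi> g) z" unfolding UU_def by blast
  then obtain V where "open V" "z \<in> V" "V \<subseteq> W" "\<forall>y\<in>V. same_germ_at W h (\<phi> g) y"
    using germ_open by blast
  then show "\<exists>T. open T \<and> z \<in> T \<and> T \<subseteq> UU" using g unfolding UU_def by blast
qed

lemma L_eq: assumes "g \<in> carrier G" "g' \<in> carrier G" "\<phi> g = \<phi> g'" shows "L g = L g'"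
proof
  fix v
  have "L g v = \<phi> g v - \<phi> g 0" "L g' v = \<phi> g' v - \<phi> g' 0"
    using phi assms lin linear_0 by fastforce+
  then show "L g v = L g' v" using assms by simp
qed

lemma jet_cong: "g \<in> carrier G \<Longrightarrow> g' \<in> carrier G \<Longrightarrow> \<phi> g = \<phi> g' \<Longrightarrow> jet g z \<Longrightarrow> jet g' z"
  unfolding jet_def using L_eq by metis

lemma jet_unique:
  assumes g: "g \<in> carrier G" "g' \<in> carrier G" and j: "jet g z" "jet g' z"
  shows "\<phi> g = \<phi> g'"
proof -
  have "L g = L g'"
    using j unfolding jet_def using bounded_linear_Blinfun_apply bl g by metis
  moreover have "bb g = bb g'"
    using j unfolding jet_def using phi g \<open>L g = L g'\<close> by (metis add_left_cancel)
  ultimately show ?thesis using phi_fun g by simp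
qed

lemma jet_closedin:
  assumes g: "g \<in> carrier G" and S: "S \<subseteq> W"
  shows "closedin (top_of_set S) {z\<in>S. jet g z}"
proof -
  have c: "continuous_on S (\<lambda>z. (h z - \<phi> g z, D z))"
    using h_cont contD phi_cont[OF g] S by (intro continuous_intros) (auto intro: continuous_on_subset)
  have "{z\<in>S. jet g z} = {z\<in>S. (h z - \<phi> g z, D z) = (0, Blinfun (L g))}"
    unfolding jet_def by auto
  then show ?thesis using continuous_closedin_preimage_constant[OF c, of "(0, Blinfun (L g))"] by metis
qed

lemma conn_prop:
  assumes C: "open C" "connected C" "C \<subseteq> W" and g: "g \<in> carrier G"
    and x: "x \<in> C" "jet g x" and inU: "\<And>z. z \<in> C \<Longrightarrow> jet g z \<Longrightarrow> z \<in> UU"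
  shows "\<forall>z\<in>C. jet g z"
proof -
  let ?Q = "{z\<in>C. jet g z}"
  have "open ?Q"
    unfolding open_subopen[of ?Q]
  proof
    fix z assume z: "z \<in> ?Q"
    then have "z \<in> UU" using inU by blast
    then obtain g' where g': "g' \<in> carrier G" "same_germ_at W h (\<phi> g') z" unfolding UU_def by blast
    then obtain V where V: "open V" "z \<in> V" "V \<subseteq> W" "\<forall>y\<in>V. same_germ_at W h (\<phi> g') y"
      using germ_open by blast
    have "\<phi> g' = \<phi> g" using jet_unique g' g germ_jet z by blast
    then have "\<forall>y\<in>V \<inter> C. jet g y" using V g' g germ_jet jet_cong by blast
    then show "\<exists>T. open T \<and> z \<in> T \<and> T \<subseteq> ?Q"
      using V C z by (intro exI[of _ "V \<inter> C"]) auto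
  qed
  then have "openin (top_of_set C) ?Q" by (auto intro: open_subset)
  moreover have "closedin (top_of_set C) ?Q" using jet_closedin g C by blast
  ultimately have "?Q = {} \<or> ?Q = C" using C connected_clopen by blast
  then show ?thesis using x by blast
qed

lemma cone:
  assumes p: "p \<in> W" and r: "r > 0" "ball p r \<subseteq> W" and ga: "\<gamma> \<in> carrier G" and hp: "h p = \<phi> \<gamma> p"
    and offU: "\<And>q. q \<in> ball p r \<Longrightarrow> h q \<noteq> \<phi> \<gamma> q \<Longrightarrow> q \<in> UU"
  shows "\<exists>g\<in>carrier G. jet g p"
proof (cases "D p = Blinfun (L \<gamma>)")
  case True then show ?thesis using ga hp unfolding jet_def by blast
next
  case False
  define A where "A = D p - Blinfun (L \<gamma>)"
  have Aapp: "blinfun_apply A v = D p v - L \<gamma> v" for v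
    unfolding A_def using bounded_linear_Blinfun_apply[OF bl[OF ga]] by (simp add: blinfun.diff_left)
  have "A \<noteq> 0" using False A_def by simp
  then obtain u where u: "blinfun_apply A u \<noteq> 0" using blinfun_eqI[of A 0] by auto
  define a where "a = norm (blinfun_apply A u)"
  have apos: "a > 0" using u a_def by simp
  define K where "K = norm A"
  have Kpos: "K > 0" using \<open>A \<noteq> 0\<close> K_def by simp
  have "u \<noteq> 0" using u by auto
  define c where "c = norm u"
  have cpos: "c > 0" using \<open>u \<noteq> 0\<close> c_def by simp
  define \<rho> where "\<rho> = a/(4*K)"
  have rpos: "\<rho> > 0" using apos Kpos \<rho>_def by simp
  define k where "k = (\<lambda>q. h q - \<phi> \<gamma> q)"
  have "(k has_derivative (\<lambda>v. D p v - L \<gamma> v)) (at p)"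
    unfolding k_def using deriv p phi_deriv ga by (intro has_derivative_diff) auto
  moreover have "(\<lambda>v. D p v - L \<gamma> v) = blinfun_apply A" by (rule ext, simp add: Aapp)
  ultimately have kd: "(k has_derivative blinfun_apply A) (at p)" by simp
  define \<epsilon> where "\<epsilon> = a / (4*(c+\<rho>))"
  have epos: "\<epsilon> > 0" using apos cpos rpos \<epsilon>_def by simp
  obtain d where d: "d>0" "\<And>y. norm(y-p) < d \<Longrightarrow> norm (k y - k p - blinfun_apply A (y-p)) \<le> \<epsilon> * norm(y-p)"
    using kd[unfolded has_derivative_at_alt] epos by blast
  have kp: "k p = 0" using hp k_def by simp
  define \<delta> where "\<delta> = min d r / (c+\<rho>)"
  have dpos: "\<delta> > 0" using d r cpos rpos \<delta>_def by simp
  have dcr: "\<delta>*(c+\<rho>) = min d r" using cpos rpos \<delta>_def by simp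
  define C where "C = (\<Union>t\<in>{0<..<\<delta>}. ball (p + t *\<^sub>R u) (\<rho>*t))"
  have Cprop: "q \<in> ball p r \<and> k q \<noteq> 0" if qC: "q \<in> C" for q
  proof -
    obtain t where t: "0<t" "t<\<delta>" "norm (q - (p + t *\<^sub>R u)) < \<rho>*t"
      using qC unfolding C_def by (auto simp: dist_norm norm_minus_commute)
    define e where "e = q - (p + t *\<^sub>R u)"
    have qp: "q - p = t *\<^sub>R u + e" unfolding e_def by simp
    have "norm (q - p) \<le> norm (t *\<^sub>R u) + norm e" unfolding qp by (rule norm_triangle_ineq)
    also have "norm (t *\<^sub>R u) = t*c" using t c_def by simp
    finally have "norm (q - p) < t*(c+\<rho>)" using t e_def by (simp add: algebra_simps)
    moreover have "t*(c+\<rho>) < \<delta>*(c+\<rho>)" using t cpos rpos by simp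
    ultimately have nqp: "norm (q-p) < min d r" "norm (q-p) < t*(c+\<rho>)" using dcr by linarith+
    have "norm (k q - blinfun_apply A (q-p)) \<le> \<epsilon> * norm (q-p)"
      using d(2)[of q] nqp kp by simp
    also have "\<dots> \<le> \<epsilon> * (t*(c+\<rho>))" using nqp epos by simp
    also have "\<dots> = t*(\<epsilon>*(c+\<rho>))" by (simp add: algebra_simps)
    also have "\<epsilon>*(c+\<rho>) = a/4" unfolding \<epsilon>_def using cpos rpos by (simp add: field_simps)
    also have "t*(a/4) = a*t/4" by simp
    finally have rem: "norm (k q - blinfun_apply A (q-p)) \<le> a*t/4" .
    have "norm (blinfun_apply A e) \<le> K * norm e" using norm_blinfun K_def by metis
    also have "\<dots> \<le> K * (\<rho>*t)" using t e_def Kpos by simp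
    also have "\<dots> = a*t/4" using Kpos \<rho>_def by (simp add: field_simps)
    finally have Ae: "norm (blinfun_apply A e) \<le> a*t/4" .
    have Aqp: "blinfun_apply A (q-p) = t *\<^sub>R blinfun_apply A u + blinfun_apply A e"
      unfolding qp by (simp add: blinfun.add_right blinfun.scaleR_right)
    have "t *\<^sub>R blinfun_apply A u = k q - blinfun_apply A e - (k q - blinfun_apply A (q-p))"
      using Aqp by simp
    then have "norm (t *\<^sub>R blinfun_apply A u) \<le> norm (k q - blinfun_apply A e) + norm (k q - blinfun_apply A (q-p))"
      by (metis norm_triangle_ineq4)
    moreover have "norm (k q - blinfun_apply A e) \<le> norm (k q) + norm (blinfun_apply A e)"
      by (rule norm_triangle_ineq4)
    ultimately have "norm (t *\<^sub>R blinfun_apply A u) \<le> norm (k q) + norm (blinfun_apply A e) + norm (k q - blinfun_apply A (q-p))"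
      by linarith
    moreover have "norm (t *\<^sub>R blinfun_apply A u) = t*a" using t a_def by simp
    ultimately have "norm (k q) \<ge> t*a/2" using rem Ae mult.commute[of a t] by linarith
    moreover have "t*a/2 > 0" using t apos by simp
    ultimately have "k q \<noteq> 0" by auto
    moreover have "q \<in> ball p r" using nqp by (simp add: dist_norm norm_minus_commute)
    ultimately show ?thesis by blast
  qed
  have openC: "open C" unfolding C_def by (intro open_UN) auto
  have connC: "connected C" unfolding C_def by (intro convex_connected cone_convex rpos)
  have CW: "C \<subseteq> W"
  proof
    fix z assume "z \<in> C"
    then have "z \<in> ball p r" using Cprop by blast
    then show "z \<in> W" using r(2) by blast
  qed
  have CU: "z \<in> UU" if zC: "z \<in> C" for z
  proof -
    have "z \<in> ball p r" "k z \<noteq> 0" using Cprop[OF zC] by auto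
    then have "z \<in> ball p r" "h z \<noteq> \<phi> \<gamma> z" unfolding k_def by auto
    then show ?thesis using offU by blast
  qed
  have inC: "p + t *\<^sub>R u \<in> C" if "0 < t" "t < \<delta>" for t
    unfolding C_def using that rpos by (intro UN_I[of t]) auto
  have x1: "p + (\<delta>/2) *\<^sub>R u \<in> C" using inC dpos by simp
  then obtain g where g: "g \<in> carrier G" "same_germ_at W h (\<phi> g) (p + (\<delta>/2) *\<^sub>R u)"
    using CU unfolding UU_def by blast
  have allj: "\<forall>z\<in>C. jet g z"
    using conn_prop[OF openC connC CW g(1) x1 germ_jet[OF g]] CU by blast
  have pcl: "p \<in> closure C"
    unfolding closure_approachable
  proof (intro allI impI)
    fix e :: real assume e: "e > 0"
    define t where "t = min (\<delta>/2) (e/(2*c))"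
    have "0 < t" "t < \<delta>" using dpos e cpos t_def by auto
    moreover have "dist (p + t *\<^sub>R u) p = t * c" using \<open>0 < t\<close> c_def by (simp add: dist_norm)
    moreover have "t * c \<le> e/2"
    proof -
      have "t \<le> e/(2*c)" using t_def by simp
      then have "t * c \<le> e/(2*c) * c" by (rule mult_right_mono) (use cpos in auto)
      also have "\<dots> = e/2" using cpos by simp
      finally show ?thesis .
    qed
    ultimately have "p + t *\<^sub>R u \<in> C" "dist (p + t *\<^sub>R u) p < e" using inC e by auto
    then show "\<exists>y\<in>C. dist y p < e" by blast
  qed
  obtain T where T: "closed T" "{z\<in>W. jet g z} = W \<inter> T"
    using jet_closedin[OF g(1) order_refl] unfolding closedin_closed by blast
  have "C \<subseteq> T"
  proof
    fix z assume z: "z \<in> C"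
    then have "z \<in> {z\<in>W. jet g z}" using allj CW by blast
    then show "z \<in> T" using T(2) by blast
  qed
  then have "closure C \<subseteq> T" using T closure_minimal by blast
  then have "p \<in> W \<inter> T" using pcl p by blast
  then show ?thesis using T g by blast
qed

end

lemma Baire_local:
  fixes Om F :: "'a::euclidean_space set" and C :: "'i \<Rightarrow> 'a set"
  assumes "open Om" "closedin (top_of_set Om) F" "F \<noteq> {}" "countable I"
   and cl: "\<And>i. i \<in> I \<Longrightarrow> closedin (top_of_set F) (F \<inter> C i)" and cov: "F \<subseteq> (\<Union>i\<in>I. C i)"
  shows "\<exists>i\<in>I. \<exists>y e. e > 0 \<and> y \<in> F \<and> ball y e \<subseteq> Om \<and> F \<inter> ball y e \<subseteq> C i"
proof -
  let ?X = "top_of_set F"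
  have FO: "F \<subseteq> Om" using assms(2) closedin_subset by fastforce
  have "completely_metrizable_space (top_of_set Om)"
    using completely_metrizable_space_openin[OF completely_metrizable_space_euclidean, of Om] assms(1)
    by simp
  then have cm: "completely_metrizable_space ?X"
    using completely_metrizable_space_closedin[OF _ assms(2)] FO
    by (simp add: subtopology_subtopology inf.absorb2)
  let ?G = "(\<lambda>i. F \<inter> C i) ` I"
  have "\<exists>i\<in>I. ?X interior_of (F \<inter> C i) \<noteq> {}"
  proof (rule ccontr)
    assume "\<not> ?thesis"
    then have "?X interior_of \<Union>?G = {}"
      by (intro Baire_category_alt) (use cm assms(4) cl in auto)
    moreover have "\<Union>?G = F" using cov by auto
    moreover have "?X interior_of F = F"
      by (simp add: interior_of_openin)
    ultimately show False using assms(3) by simp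
  qed
  then obtain i y where i: "i \<in> I" and y: "y \<in> ?X interior_of (F \<inter> C i)" by blast
  then obtain T where T: "openin ?X T" "y \<in> T" "T \<subseteq> F \<inter> C i"
    unfolding interior_of_def by blast
  then obtain Z where Z: "open Z" "T = F \<inter> Z" by (meson openin_open)
  have "y \<in> Om \<inter> Z" using T Z FO by auto
  moreover have "open (Om \<inter> Z)" using Z assms(1) by auto
  ultimately obtain e where e: "e > 0" "ball y e \<subseteq> Om \<inter> Z"
    by (meson openE)
  show ?thesis
    using i e T Z by (intro bexI[of _ i] exI[of _ y] exI[of _ e]) auto
qed


context cfg begin

lemma main: "\<forall>x\<in>W. \<exists>g\<in>carrier G. same_germ_at W h (\<phi> g) x"
proof (rule ccontr)
  assume "\<not> ?thesis"
  then obtain x0 where x0: "x0 \<in> W" "x0 \<notin> UU" unfolding UU_def by blast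
  define F where "F = W - UU"
  have "F = W \<inter> (- UU)" by (auto simp: F_def)
  moreover have "closed (- UU)" using UU_open by (simp add: closed_Compl)
  ultimately have Fcl: "closedin (top_of_set W) F" unfolding closedin_closed by blast
  have FW: "F \<subseteq> W" by (auto simp: F_def)
  have x0F: "x0 \<in> F" using x0 F_def by blast
  have cl1: "closedin (top_of_set F) (F \<inter> {x. h x = \<phi> g x})" if g: "g \<in> carrier G" for g
  proof -
    have c: "continuous_on F (\<lambda>x. h x - \<phi> g x)"
      using h_cont phi_cont[OF g] FW by (intro continuous_intros) (auto intro: continuous_on_subset)
    have "{x\<in>F. h x - \<phi> g x = 0} = F \<inter> {x. h x = \<phi> g x}" by auto
    then show ?thesis using continuous_closedin_preimage_constant[OF c, of 0] by metis
  qed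
  have cov1: "F \<subseteq> (\<Union>g\<in>carrier G. {x. h x = \<phi> g x})"
  proof
    fix x assume "x \<in> F"
    then have "h x \<in> orbit G \<phi> x" using orb FW by blast
    then obtain g where "g \<in> carrier G" "h x = \<phi> g x" unfolding orbit_def by blast
    then show "x \<in> (\<Union>g\<in>carrier G. {x. h x = \<phi> g x})" by blast
  qed
  obtain \<gamma> y \<epsilon> where ga: "\<gamma> \<in> carrier G" and e: "\<epsilon> > 0" and yF: "y \<in> F"
    and yW: "ball y \<epsilon> \<subseteq> W" and Fsub: "F \<inter> ball y \<epsilon> \<subseteq> {x. h x = \<phi> \<gamma> x}"
    using Baire_local[OF opW Fcl _ cnt cl1 cov1] x0F by blast
  have jets: "\<exists>g\<in>carrier G. jet g p" if p: "p \<in> F \<inter> ball y \<epsilon>" for p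
  proof -
    obtain r where r: "r > 0" "ball p r \<subseteq> ball y \<epsilon>"
      using p openE[OF open_ball[of y \<epsilon>]] by blast
    have pW: "p \<in> W" using p FW by blast
    have hp: "h p = \<phi> \<gamma> p" using p Fsub by blast
    show ?thesis
    proof (rule cone[OF pW r(1) _ ga hp])
      show "ball p r \<subseteq> W" using r yW by blast
      fix q assume q: "q \<in> ball p r" "h q \<noteq> \<phi> \<gamma> q"
      then have "q \<notin> F" using Fsub r by blast
      moreover have "q \<in> W" using q r yW by blast
      ultimately show "q \<in> UU" using F_def by blast
    qed
  qed
  define F2 where "F2 = F \<inter> ball y \<epsilon>"
  obtain T where T: "closed T" "F = W \<inter> T" using Fcl unfolding closedin_closed by blast
  have "F2 = ball y \<epsilon> \<inter> T" unfolding F2_def T(2) using yW by blast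
  then have Fcl2: "closedin (top_of_set (ball y \<epsilon>)) F2" unfolding closedin_closed using T(1) by blast
  have F2W: "F2 \<subseteq> W" unfolding F2_def using FW by blast
  have y2: "y \<in> F2" unfolding F2_def using yF e by simp
  have cl2: "closedin (top_of_set F2) (F2 \<inter> {z. jet g z})" if g: "g \<in> carrier G" for g
  proof -
    have "{z\<in>F2. jet g z} = F2 \<inter> {z. jet g z}" by auto
    then show ?thesis using jet_closedin[OF g F2W] by metis
  qed
  have cov2: "F2 \<subseteq> (\<Union>g\<in>carrier G. {z. jet g z})"
  proof
    fix p assume "p \<in> F2"
    then have "p \<in> F \<inter> ball y \<epsilon>" unfolding F2_def .
    then obtain g where "g \<in> carrier G" "jet g p" using jets by blast
    then show "p \<in> (\<Union>g\<in>carrier G. {z. jet g z})" by blast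
  qed
  obtain \<gamma>2 y2 \<epsilon>2 where ga2: "\<gamma>2 \<in> carrier G" and e2: "\<epsilon>2 > 0" and y2F: "y2 \<in> F2"
    and y2B: "ball y2 \<epsilon>2 \<subseteq> ball y \<epsilon>" and F2sub: "F2 \<inter> ball y2 \<epsilon>2 \<subseteq> {z. jet \<gamma>2 z}"
    using Baire_local[OF open_ball Fcl2 _ cnt cl2 cov2] y2 by blast
  have BW: "ball y2 \<epsilon>2 \<subseteq> W" using y2B yW by (rule order_trans)
  have y2inB: "y2 \<in> ball y2 \<epsilon>2" using e2 by simp
  have y2notU: "y2 \<notin> UU" using y2F unfolding F2_def F_def by blast
  have inF2: "x \<in> F2" if "x \<in> ball y2 \<epsilon>2" "x \<notin> UU" for x
  proof -
    have "x \<in> W" "x \<in> ball y \<epsilon>" using that BW y2B by blast+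
    then show ?thesis using that(2) unfolding F2_def F_def by blast
  qed
  have hB: "\<forall>x\<in>ball y2 \<epsilon>2. h x = \<phi> \<gamma>2 x"
  proof
    fix x assume xB: "x \<in> ball y2 \<epsilon>2"
    show "h x = \<phi> \<gamma>2 x"
    proof (cases "x \<in> UU")
      case False
      then have "x \<in> F2 \<inter> ball y2 \<epsilon>2" using inF2 xB by blast
      then have "jet \<gamma>2 x" using F2sub by blast
      then show ?thesis unfolding jet_def by blast
    next
      case True
      then obtain g where g: "g \<in> carrier G" "same_germ_at W h (\<phi> g) x" unfolding UU_def by blast
      have jx: "jet g x" using germ_jet[OF g] .
      have "\<exists>z\<in>ball y2 \<epsilon>2. z \<notin> UU \<and> jet g z"
      proof (rule ccontr)
        assume "\<not> ?thesis"
        then have iU: "\<And>z. z \<in> ball y2 \<epsilon>2 \<Longrightarrow> jet g z \<Longrightarrow> z \<in> UU" by blast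
        have "\<forall>z\<in>ball y2 \<epsilon>2. jet g z"
          by (rule conn_prop[OF open_ball convex_connected[OF convex_ball] BW g(1) xB jx iU])
        then show False using y2inB y2notU iU by blast
      qed
      then obtain z where z: "z \<in> ball y2 \<epsilon>2" "z \<notin> UU" "jet g z" by blast
      then have "z \<in> F2 \<inter> ball y2 \<epsilon>2" using inF2 by blast
      then have "jet \<gamma>2 z" using F2sub by blast
      then have "\<phi> g = \<phi> \<gamma>2" using jet_unique[OF g(1) ga2 z(3)] by simp
      then show ?thesis using jx unfolding jet_def by simp
    qed
  qed
  have "same_germ_at W h (\<phi> \<gamma>2) y2"
    unfolding same_germ_at_def using hB BW y2inB by (intro exI[of _ "ball y2 \<epsilon>2"]) auto
  then have "y2 \<in> UU" unfolding UU_def using ga2 BW y2inB by blast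
  then show False using y2notU by blast
qed

end

theorem corollary1:
  fixes G :: "('g, 'b) monoid_scheme"
    and \<phi> :: "'g \<Rightarrow> real^'n \<Rightarrow> real^'n"
    and W :: "(real^'n) set"
    and h :: "real^'n \<Rightarrow> real^'n"
  assumes "group_action G UNIV \<phi>"
    and "countable (carrier G)"
    and "\<forall>g\<in>carrier G. affine_map (\<phi> g)"
    and "open W"
    and "C1_on W h"
    and "\<forall>x\<in>W. h x \<in> orbit G \<phi> x"
  shows "\<forall>x\<in>W. \<exists>g\<in>carrier G. same_germ_at W h (\<phi> g) x"
proof -
  obtain D where D: "\<forall>x\<in>W. (h has_derivative blinfun_apply (D x)) (at x)" "continuous_on W D"
    using assms(5) unfolding C1_on_def by (elim exE conjE) (rule that)
  have Lex: "\<forall>g\<in>carrier G. \<exists>Lb. linear (fst Lb) \<and> (\<forall>x. \<phi> g x = fst Lb x + snd Lb)"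
  proof
    fix g assume "g \<in> carrier G"
    then obtain L b where "linear L" "\<forall>x. \<phi> g x = L x + b"
      using assms(3) unfolding affine_map_def by blast
    then show "\<exists>Lb. linear (fst Lb) \<and> (\<forall>x. \<phi> g x = fst Lb x + snd Lb)"
      by (intro exI[of _ "(L, b)"]) simp
  qed
  obtain Lb where Lb: "\<forall>g\<in>carrier G. linear (fst (Lb g)) \<and> (\<forall>x. \<phi> g x = fst (Lb g) x + snd (Lb g))"
    using bchoice[OF Lex] by (elim exE) (rule that)
  interpret cfg G \<phi> W h D "\<lambda>g. fst (Lb g)" "\<lambda>g. snd (Lb g)"
  proof (rule cfg.intro)
    show "countable (carrier G)" by (rule assms(2))
    show "open W" by (rule assms(4))
    show "\<And>x. x \<in> W \<Longrightarrow> (h has_derivative blinfun_apply (D x)) (at x)" using D(1) by blast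
    show "continuous_on W D" by (rule D(2))
    show "\<And>g. g \<in> carrier G \<Longrightarrow> linear (fst (Lb g))" using Lb by blast
    show "\<And>g x. g \<in> carrier G \<Longrightarrow> \<phi> g x = fst (Lb g) x + snd (Lb g)" using Lb by blast
    show "\<And>x. x \<in> W \<Longrightarrow> h x \<in> orbit G \<phi> x" using assms(6) by blast
  qed
  show ?thesis using main .
qed

end
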